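(* There is a constant $C_1>0$ such that for all integers $r\geq1$ and $k_1,\ldots,k_r\geq2$, writing $K=k_1+\cdots+k_r$, \[ \frac{1}{2^{K}}<\sum_{n_1\geq\cdots\geq n_r\geq2}\frac{1}{n_1^{k_1}\cdots n_r^{k_r}}\leq\frac{C_1}{2^{K}},\qquad \frac{1}{2^{K+1}}<\sum_{n_1\geq\cdots\geq n_{r+1}\geq2}\frac{1}{n_1^{k_1}\cdots n_r^{k_r}\,n_{r+1}}\leq\frac{C_1}{2^{K}}. \]
   Context: The constant $C_1$ is independent of $r$ and $k_1,\ldots,k_r$. *)

theory Defs
  imports "HOL-Analysis.Analysis"
begin

text \<open>Index tuples (n_1,...,n_m) with n_1 \<ge> ... \<ge> n_m \<ge> 2, stored as
  extensional functions on {..<m}: position i (0-based) holds n_(i+1).\<close>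
definition desc_tuples :: "nat \<Rightarrow> (nat \<Rightarrow> nat) set" where
  "desc_tuples m = {n. n \<in> {..<m} \<rightarrow>\<^sub>E (UNIV :: nat set)
      \<and> (\<forall>i. Suc i < m \<longrightarrow> n (Suc i) \<le> n i)
      \<and> (\<forall>i<m. 2 \<le> n i)}"

end

theory Submission imports Defs begin

definition Dt :: "nat \<Rightarrow> nat \<Rightarrow> (nat \<Rightarrow> nat) set" where
  "Dt q m = {n \<in> desc_tuples q. \<forall>i<q. n i \<le> m}"

definition tcons :: "nat \<Rightarrow> (nat \<Rightarrow> nat) \<Rightarrow> nat \<Rightarrow> nat" where
  "tcons a t = (\<lambda>i. if i = 0 then a else t (i - 1))"

lemma desc_mono:
  assumes "n \<in> desc_tuples q" "i \<le> j" "j < q"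
  shows "n j \<le> n i"
  using assms(2,3)
proof (induction j)
  case 0 then show ?case by simp
next
  case (Suc j)
  have "n (Suc j) \<le> n j" using assms(1) Suc.prems by (auto simp: desc_tuples_def)
  then show ?case using Suc by (cases "i = Suc j") auto
qed

lemma Dt_finite: "finite (Dt q m)"
proof -
  have "Dt q m \<subseteq> PiE {..<q} (\<lambda>_. {..m})"
    by (auto simp: Dt_def desc_tuples_def PiE_def extensional_def)
  then show ?thesis by (rule finite_subset) (simp add: finite_PiE)
qed

lemma Dt_mono: "m \<le> m' \<Longrightarrow> Dt q m \<subseteq> Dt q m'"
  by (auto simp: Dt_def)

lemma Dt0: "Dt 0 m \<subseteq> {\<lambda>_. undefined}"
  by (auto simp: Dt_def desc_tuples_def PiE_def extensional_def)

lemma Dt_Suc_eq: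
  "Dt (Suc q) m = (\<lambda>(a,t). tcons a t) ` (SIGMA a:{2..m}. Dt q a)"
proof (intro equalityI subsetI)
  fix n assume n: "n \<in> Dt (Suc q) m"
  let ?t = "\<lambda>i. n (Suc i)"
  have nd: "n \<in> desc_tuples (Suc q)" using n by (simp add: Dt_def)
  have "?t \<in> Dt q (n 0)"
    using n desc_mono[OF nd, of 0] by (auto simp: Dt_def desc_tuples_def PiE_def extensional_def)
  moreover have "n 0 \<in> {2..m}" using n by (auto simp: Dt_def desc_tuples_def)
  moreover have "n = tcons (n 0) ?t" by (auto simp: tcons_def)
  ultimately show "n \<in> (\<lambda>(a,t). tcons a t) ` (SIGMA a:{2..m}. Dt q a)" by force
next
  fix n assume "n \<in> (\<lambda>(a,t). tcons a t) ` (SIGMA a:{2..m}. Dt q a)"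
  then obtain a t where a: "a \<in> {2..m}" and t: "t \<in> Dt q a" and n: "n = tcons a t" by auto
  have t0: "t 0 \<le> a" if "0 < q" using t that by (auto simp: Dt_def)
  have td: "t \<in> desc_tuples q" using t by (simp add: Dt_def)
  have tm: "\<forall>i<q. t i \<le> a" using t by (simp add: Dt_def)
  show "n \<in> Dt (Suc q) m" unfolding Dt_def desc_tuples_def
  proof (intro CollectI conjI allI impI)
    show "n \<in> {..<Suc q} \<rightarrow>\<^sub>E UNIV"
      using td unfolding n by (auto simp: desc_tuples_def PiE_def extensional_def tcons_def)
  next
    fix i assume i: "Suc i < Suc q"
    show "n (Suc i) \<le> n i"
    proof (cases i)
      case 0 then show ?thesis using t0 i by (simp add: n tcons_def)
    next
      case (Suc j) then show ?thesis using td i by (simp add: n tcons_def desc_tuples_def)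
    qed
  next
    fix i assume i: "i < Suc q"
    show "2 \<le> n i" using a td i by (cases i) (auto simp: n tcons_def desc_tuples_def)
  next
    fix i assume i: "i < Suc q"
    show "n i \<le> m" using a tm i by (cases i) (auto simp: n tcons_def)
  qed
qed

lemma tcons_inj: "inj_on (\<lambda>(a,t). tcons a t) X"
proof (rule inj_onI, clarify)
  fix a t b u assume h: "tcons a t = tcons b u"
  have "a = b" using fun_cong[OF h, of 0] by (simp add: tcons_def)
  moreover have "t = u"
  proof
    fix i show "t i = u i" using fun_cong[OF h, of "Suc i"] by (simp add: tcons_def)
  qed
  ultimately show "a = b \<and> t = u" by simp
qed

lemma Dt_Suc_sum:
  "(\<Sum>n\<in>Dt (Suc q) m. F n) = (\<Sum>a=2..m. \<Sum>t\<in>Dt q a. F (tcons a t))"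
  unfolding Dt_Suc_eq
  by (subst sum.reindex[OF tcons_inj]) (simp add: sum.Sigma Dt_finite split_def)


definition Qf :: "nat \<Rightarrow> real" where
  "Qf m = 6 * real m * (real m - 1) / ((real m + 1) * (real m + 2))"

lemma Qf_step:
  fixes x :: real assumes "x \<ge> 0"
  shows "6 * x * (x - 1) / ((x + 1) * (x + 2)) + 4 / (x+1) ^ 2 * (6 * (x+1) * x / ((x + 2) * (x + 3)))
     = 6 * (x+1) * x / ((x + 2) * (x + 3))"
proof -
  have h: "x + 1 \<noteq> 0" "x + 2 \<noteq> 0" "x + 3 \<noteq> 0" using assms by auto
  have "4 / (x+1) ^ 2 * (6 * (x+1) * x / ((x + 2) * (x + 3))) = 24 * x / ((x+1) * (x+2) * (x+3))"
  proof -
    have "4 / (x+1) ^ 2 * (6 * (x+1) * x / ((x + 2) * (x + 3))) = (24 * x * (x+1)) / ((x+1) * ((x+1) * (x+2) * (x+3)))"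
      by (simp add: power2_eq_square mult_ac)
    also have "\<dots> = 24 * x / ((x+1) * (x+2) * (x+3))"
      using h by (metis (no_types, lifting) mult.commute mult_divide_mult_cancel_left_if)
    finally show ?thesis .
  qed
  moreover have "6 * x * (x - 1) / ((x + 1) * (x + 2)) = 6 * x * (x - 1) * (x+3) / ((x + 1) * (x + 2) * (x+3))"
    using h by simp
  moreover have "6 * (x+1) * x / ((x + 2) * (x + 3)) = 6 * (x+1) * x * (x+1) / ((x + 1) * (x + 2) * (x+3))"
    using h by simp
  moreover have "6 * x * (x - 1) * (x+3) + 24 * x = 6 * (x+1) * x * (x+1)" by (simp add: algebra_simps)
  ultimately show ?thesis by (metis add_divide_distrib)
qed

lemma Qf_sum: "m \<ge> 2 \<Longrightarrow> (\<Sum>a=2..m. 4 / real a ^ 2 * Qf a) = Qf m"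
proof (induction m rule: dec_induct)
  case base then show ?case by (simp add: Qf_def)
next
  case (step m)
  have "(\<Sum>a=2..Suc m. 4 / real a ^ 2 * Qf a) = Qf m + 4 / real (Suc m) ^ 2 * Qf (Suc m)"
    using step by (simp add: sum.cl_ivl_Suc)
  also have "\<dots> = Qf (Suc m)" using Qf_step[of "real m"] by (simp add: Qf_def add.commute)
  finally show ?case .
qed

lemma Qf_ge1: "m \<ge> 2 \<Longrightarrow> Qf m \<ge> 1"
proof -
  assume m: "m \<ge> 2"
  then have "real m \<ge> 2" by simp
  have "0 \<le> (5 * real m + 1) * (real m - 2)" using \<open>real m \<ge> 2\<close> by simp
  then have "(real m + 1) * (real m + 2) \<le> 6 * real m * (real m - 1)" by (simp add: algebra_simps)
  then show ?thesis using m by (simp add: Qf_def field_simps)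
qed

lemma Qf_le6: "Qf m \<le> 6"
proof -
  have "6 * real m * (real m - 1) \<le> 6 * ((real m + 1) * (real m + 2))" by (simp add: algebra_simps)
  then show ?thesis by (simp add: Qf_def divide_le_eq)
qed

lemma main_bound:
  fixes \<Phi> :: "(nat \<Rightarrow> nat) \<Rightarrow> real" and B :: real
  assumes \<Phi>0: "\<And>t. \<Phi> t \<ge> 0"
    and \<Phi>B: "\<And>a. a \<ge> 2 \<Longrightarrow> (\<Sum>t\<in>Dt s a. \<Phi> t) \<le> B"
    and B0: "B \<ge> 0"
  shows "m \<ge> 2 \<Longrightarrow> (\<forall>i<p. \<forall>a\<ge>2. 0 \<le> w i a \<and> w i a \<le> 4 / real a ^ 2) \<Longrightarrow>
    (\<Sum>n\<in>Dt (p+s) m. (\<Prod>i<p. w i (n i)) * \<Phi> (\<lambda>j. n (j + p))) \<le> Qf m * B"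
proof (induction p arbitrary: m w)
  case 0
  have "(\<Sum>t\<in>Dt s m. \<Phi> t) \<le> B" using \<Phi>B 0 by simp
  also have "B \<le> Qf m * B" using Qf_ge1[OF 0(1)] B0 by (simp add: mult_le_cancel_right1)
  finally show ?case by simp
next
  case (Suc p)
  let ?w = "\<lambda>i. w (Suc i)"
  have "(\<Sum>n\<in>Dt (Suc p + s) m. (\<Prod>i<Suc p. w i (n i)) * \<Phi> (\<lambda>j. n (j + Suc p)))
      = (\<Sum>a=2..m. \<Sum>t\<in>Dt (p+s) a. w 0 a * ((\<Prod>i<p. ?w i (t i)) * \<Phi> (\<lambda>j. t (j + p))))"
  proof -
    have e: "(\<Prod>i<Suc p. w i (tcons a t i)) * \<Phi> (\<lambda>j. tcons a t (j + Suc p))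
       = w 0 a * ((\<Prod>i<p. ?w i (t i)) * \<Phi> (\<lambda>j. t (j + p)))" for a t
      by (simp only: prod.lessThan_Suc_shift) (simp add: tcons_def mult.assoc)
    show ?thesis by (simp only: add_Suc Dt_Suc_sum e)
  qed
  also have "\<dots> = (\<Sum>a=2..m. w 0 a * (\<Sum>t\<in>Dt (p+s) a. (\<Prod>i<p. ?w i (t i)) * \<Phi> (\<lambda>j. t (j + p))))"
    by (simp add: sum_distrib_left)
  also have "\<dots> \<le> (\<Sum>a=2..m. 4 / real a ^ 2 * (Qf a * B))"
  proof (rule sum_mono)
    fix a assume a: "a \<in> {2..m}"
    have IH: "(\<Sum>t\<in>Dt (p+s) a. (\<Prod>i<p. ?w i (t i)) * \<Phi> (\<lambda>j. t (j + p))) \<le> Qf a * B"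
      using Suc.IH[of a ?w] Suc.prems a by auto
    have w0: "0 \<le> w 0 a" "w 0 a \<le> 4 / real a ^ 2" using Suc.prems a by auto
    have "0 \<le> Qf a * B" using Qf_ge1[of a] a B0 by simp
    then show "w 0 a * (\<Sum>t\<in>Dt (p+s) a. (\<Prod>i<p. ?w i (t i)) * \<Phi> (\<lambda>j. t (j + p))) \<le> 4 / real a ^ 2 * (Qf a * B)"
      using IH w0 by (meson mult_left_mono mult_right_mono order_trans)
  qed
  also have "\<dots> = (\<Sum>a=2..m. 4 / real a ^ 2 * Qf a) * B"
    by (simp add: sum_distrib_right mult.assoc)
  also have "\<dots> = Qf m * B" using Qf_sum[OF Suc.prems(1)] by simp
  finally show ?case .
qed


lemma H_bound: "a \<ge> 1 \<Longrightarrow>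
  (\<Sum>c=2..a. (\<Sum>b=2..c. 1 / real b) / real c ^ 2) \<le> 1 - 1 / real a - (\<Sum>b=2..a. 1 / real b) / real a"
proof (induction a rule: dec_induct)
  case base then show ?case by simp
next
  case (step a)
  define H where "H = (\<Sum>b=2..a. 1 / real b)"
  have H0: "H \<ge> 0" unfolding H_def by (intro sum_nonneg) auto
  have HS: "(\<Sum>b=2..Suc a. 1 / real b) = H + 1 / (real a + 1)"
    unfolding H_def using step(1) by (simp add: sum.cl_ivl_Suc add.commute)
  have lhs: "(\<Sum>c=2..Suc a. (\<Sum>b=2..c. 1 / real b) / real c ^ 2)
     = (\<Sum>c=2..a. (\<Sum>b=2..c. 1 / real b) / real c ^ 2) + (H + 1 / (real a + 1)) / (real a + 1) ^ 2"
    using step(1) HS by (simp add: sum.cl_ivl_Suc add.commute)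
  define u where "u = real a + 1"
  have u: "u \<ge> 2" "real a = u - 1" using step(1) by (auto simp: u_def)
  have key: "(H + 1/u)/u^2 + (H + 1/u)/u + 1/u \<le> 1/(u-1) + H/(u-1)"
  proof -
    have c1: "(1/u^2 + 1/u) \<le> 1/(u-1)" using u by (simp add: field_simps power2_eq_square)
    have c2: "1/u^3 + 1/u^2 + 1/u \<le> 1/(u-1)"
      using u by (simp add: field_simps power2_eq_square power3_eq_cube)
    have "(H + 1/u)/u^2 + (H + 1/u)/u + 1/u = H * (1/u^2 + 1/u) + (1/u^3 + 1/u^2 + 1/u)"
      using u by (simp add: field_simps power2_eq_square power3_eq_cube)
    also have "\<dots> \<le> H * (1/(u-1)) + 1/(u-1)" using c1 c2 H0
      by (meson add_mono mult_left_mono)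
    finally show ?thesis by simp
  qed
  show ?case unfolding lhs HS using step(3) key unfolding H_def[symmetric] u_def[symmetric]
    using u by (simp add: diff_divide_distrib add_divide_distrib)
qed

lemma Dt0_sum: "c \<ge> 0 \<Longrightarrow> (\<Sum>v\<in>Dt 0 b. (c::real)) \<le> c"
proof -
  assume c: "c \<ge> 0"
  have "card (Dt 0 b) \<le> 1" using card_mono[OF _ Dt0[of b]] by simp
  then have "real (card (Dt 0 b)) \<le> 1" by simp
  then show ?thesis using c by (simp add: mult_left_le_one_le)
qed

lemma Phi_bound:
  assumes "k' \<ge> 2"
  shows "(\<Sum>t\<in>Dt 2 a. (2 / real (t 0)) ^ k' / real (t 1)) \<le> 4"
proof -
  have "(\<Sum>t\<in>Dt 2 a. (2 / real (t 0)) ^ k' / real (t 1))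
     = (\<Sum>c=2..a. \<Sum>b=2..c. \<Sum>v\<in>Dt 0 b. (2 / real c) ^ k' / real b)"
    by (simp add: numeral_2_eq_2 Dt_Suc_sum tcons_def)
  also have "\<dots> \<le> (\<Sum>c=2..a. \<Sum>b=2..c. 4 * ((1 / real b) / real c ^ 2))"
  proof (intro sum_mono)
    fix c b assume c: "c \<in> {2..a}" and b: "b \<in> {2..c}"
    have "(2 / real c) ^ k' \<le> (2 / real c) ^ 2"
      using c assms by (intro power_decreasing) auto
    then have "(2 / real c) ^ k' / real b \<le> 4 * ((1 / real b) / real c ^ 2)"
      using b by (simp add: power_divide divide_right_mono field_simps)
    moreover have "(\<Sum>v\<in>Dt 0 b. (2 / real c) ^ k' / real b) \<le> (2 / real c) ^ k' / real b"
      by (rule Dt0_sum) simp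
    ultimately show "(\<Sum>v\<in>Dt 0 b. (2 / real c) ^ k' / real b) \<le> 4 * ((1 / real b) / real c ^ 2)"
      by linarith
  qed
  also have "\<dots> = 4 * (\<Sum>c=2..a. (\<Sum>b=2..c. 1 / real b) / real c ^ 2)"
    by (simp add: sum_distrib_left sum_divide_distrib)
  also have "\<dots> \<le> 4"
  proof (cases "a \<ge> 1")
    case True
    have "(\<Sum>b=2..a. 1 / real b) / real a \<ge> 0" by (intro divide_nonneg_nonneg sum_nonneg) auto
    moreover have "1 / real a \<ge> 0" by simp
    ultimately show ?thesis using H_bound[OF True] by linarith
  next
    case False then show ?thesis by simp
  qed
  finally show ?thesis .
qed


lemma prod_scale:
  assumes "\<forall>i<r. n i > (0::nat)"
  shows "1 / (\<Prod>i<r. real (n i) ^ k i) = 1 / 2 ^ (\<Sum>i<r. k i) * (\<Prod>i<r. (2 / real (n i)) ^ k i)"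
proof -
  have "(\<Prod>i<r. (2 / real (n i)) ^ k i) = (\<Prod>i<r. (2::real) ^ k i) / (\<Prod>i<r. real (n i) ^ k i)"
    by (simp add: power_divide prod_dividef)
  also have "(\<Prod>i<r. (2::real) ^ k i) = 2 ^ (\<Sum>i<r. k i)" by (simp add: power_sum)
  finally show ?thesis by simp
qed

lemma desc_pos: "n \<in> desc_tuples q \<Longrightarrow> i < q \<Longrightarrow> n i > 0"
  by (auto simp: desc_tuples_def)

lemma finite_in_Dt:
  assumes "finite F" "F \<subseteq> desc_tuples q"
  shows "F \<subseteq> Dt q (2 + (\<Sum>n\<in>F. \<Sum>i<q. n i))"
proof
  fix n assume n: "n \<in> F"
  have "n i \<le> 2 + (\<Sum>n\<in>F. \<Sum>i<q. n i)" if "i < q" for i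
  proof -
    have "n i \<le> (\<Sum>i<q. n i)" using that by (intro member_le_sum) auto
    also have "\<dots> \<le> (\<Sum>n\<in>F. \<Sum>i<q. n i)" using n assms(1) by (intro member_le_sum) auto
    finally show ?thesis by simp
  qed
  then show "n \<in> Dt q (2 + (\<Sum>n\<in>F. \<Sum>i<q. n i))" using n assms(2) by (auto simp: Dt_def)
qed

lemma f_bound:
  assumes k: "\<forall>i<r. k i \<ge> 2" and m: "m \<ge> 2"
  shows "(\<Sum>n\<in>Dt r m. 1 / (\<Prod>i<r. real (n i) ^ k i)) \<le> 6 / 2 ^ (\<Sum>i<r. k i)"
proof -
  let ?w = "\<lambda>i a. (2 / real a) ^ k i"
  have wb: "\<forall>i<r. \<forall>a\<ge>2. 0 \<le> ?w i a \<and> ?w i a \<le> 4 / real a ^ 2"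
  proof (intro allI impI conjI)
    fix i a assume i: "i < r" and a: "(2::nat) \<le> a"
    have "(2 / real a) ^ k i \<le> (2 / real a) ^ 2" using k i a by (intro power_decreasing) auto
    then show "?w i a \<le> 4 / real a ^ 2" by (simp add: power_divide)
  qed simp
  have MB: "(\<Sum>n\<in>Dt r m. (\<Prod>i<r. ?w i (n i))) \<le> Qf m"
    using main_bound[where s=0 and \<Phi>="\<lambda>_. 1" and B=1 and p=r and w="?w", OF _ _ _ m wb]
      Dt0_sum[of 1] by simp
  have "(\<Sum>n\<in>Dt r m. 1 / (\<Prod>i<r. real (n i) ^ k i))
      = 1 / 2 ^ (\<Sum>i<r. k i) * (\<Sum>n\<in>Dt r m. (\<Prod>i<r. ?w i (n i)))"
    unfolding sum_distrib_left
  proof (intro sum.cong refl)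
    fix n assume "n \<in> Dt r m"
    then have "\<forall>i<r. n i > 0" by (auto simp: Dt_def intro: desc_pos)
    from prod_scale[OF this, of k] show "1 / (\<Prod>i<r. real (n i) ^ k i) =
      1 / 2 ^ (\<Sum>i<r. k i) * (\<Prod>i<r. (2 / real (n i)) ^ k i)" by simp
  qed
  also have "\<dots> \<le> 1 / 2 ^ (\<Sum>i<r. k i) * 6"
    using MB Qf_le6[of m] by (intro mult_left_mono) auto
  finally show ?thesis by simp
qed


lemma aux_div: "1 / (A::real) = c * (B * w) \<Longrightarrow> 1 / (A * x) = c * (B * (w / x))"
proof -
  assume h: "1 / A = c * (B * w)"
  have "1 / (A * x) = (1 / A) / x" by simp
  then show ?thesis using h by simp
qed

lemma g_bound:
  assumes k: "\<forall>i<r. k i \<ge> 2" and m: "m \<ge> 2" and r: "r \<ge> 1"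
  shows "(\<Sum>n\<in>Dt (Suc r) m. 1 / ((\<Prod>i<r. real (n i) ^ k i) * real (n r))) \<le> 24 / 2 ^ (\<Sum>i<r. k i)"
proof -
  obtain p where p: "r = Suc p" using r by (cases r) auto
  let ?w = "\<lambda>i a. (2 / real a) ^ k i"
  let ?\<Phi> = "\<lambda>t. (2 / real (t 0)) ^ k p / real (t 1)"
  have wb: "\<forall>i<p. \<forall>a\<ge>2. 0 \<le> ?w i a \<and> ?w i a \<le> 4 / real a ^ 2"
  proof (intro allI impI conjI)
    fix i a assume i: "i < p" and a: "(2::nat) \<le> a"
    have "(2 / real a) ^ k i \<le> (2 / real a) ^ 2" using k i a p by (intro power_decreasing) auto
    then show "?w i a \<le> 4 / real a ^ 2" by (simp add: power_divide)
  qed simp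
  have kp: "k p \<ge> 2" using k p by auto
  have MB: "(\<Sum>n\<in>Dt (p+2) m. (\<Prod>i<p. ?w i (n i)) * ?\<Phi> (\<lambda>j. n (j + p))) \<le> Qf m * 4"
    by (rule main_bound[where s=2 and \<Phi>="?\<Phi>" and B=4 and p=p and w="?w", OF _ _ _ m wb])
       (use Phi_bound[OF kp] in auto)
  have "(\<Sum>n\<in>Dt (Suc r) m. 1 / ((\<Prod>i<r. real (n i) ^ k i) * real (n r)))
      = 1 / 2 ^ (\<Sum>i<r. k i) * (\<Sum>n\<in>Dt (p+2) m. (\<Prod>i<p. ?w i (n i)) * ?\<Phi> (\<lambda>j. n (j + p)))"
    unfolding sum_distrib_left
  proof (intro sum.cong)
    show "Dt (Suc r) m = Dt (p+2) m" using p by simp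
  next
    fix n assume "n \<in> Dt (p+2) m"
    then have "\<forall>i<r. n i > 0" using p by (auto simp: Dt_def intro: desc_pos)
    from prod_scale[OF this, of k] have "1 / (\<Prod>i<r. real (n i) ^ k i) =
      1 / 2 ^ (\<Sum>i<r. k i) * (\<Prod>i<r. (2 / real (n i)) ^ k i)" .
    then show "1 / ((\<Prod>i<r. real (n i) ^ k i) * real (n r)) =
      1 / 2 ^ (\<Sum>i<r. k i) * ((\<Prod>i<p. ?w i (n i)) * ?\<Phi> (\<lambda>j. n (j + p)))"
      unfolding p by (simp only: prod.lessThan_Suc aux_div) simp
  qed
  also have "\<dots> \<le> 1 / 2 ^ (\<Sum>i<r. k i) * 24"
    using MB Qf_le6[of m] by (intro mult_left_mono) auto
  finally show ?thesis by simp
qed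


definition e2 :: "nat \<Rightarrow> nat \<Rightarrow> nat" where "e2 q = (\<lambda>i. if i < q then 2 else undefined)"
definition e3 :: "nat \<Rightarrow> nat \<Rightarrow> nat" where "e3 q = (\<lambda>i. if i < q then (if i = 0 then 3 else 2) else undefined)"

lemma e_in: "e2 q \<in> desc_tuples q" "e3 q \<in> desc_tuples q"
  by (auto simp: e2_def e3_def desc_tuples_def PiE_def extensional_def)

lemma e_ne: "q \<ge> 1 \<Longrightarrow> e2 q \<noteq> e3 q"
  by (auto simp: e2_def e3_def dest!: fun_cong[of _ _ 0])

lemma summable_and_bound:
  fixes h :: "(nat \<Rightarrow> nat) \<Rightarrow> real"
  assumes nn: "\<And>n. n \<in> desc_tuples q \<Longrightarrow> h n \<ge> 0"
    and bd: "\<And>m. m \<ge> 2 \<Longrightarrow> sum h (Dt q m) \<le> C"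
  shows "h summable_on desc_tuples q" "infsum h (desc_tuples q) \<le> C"
proof -
  have fb: "sum h F \<le> C" if F: "finite F" "F \<subseteq> desc_tuples q" for F
  proof -
    let ?M = "2 + (\<Sum>n\<in>F. \<Sum>i<q. n i)"
    have "sum h F \<le> sum h (Dt q ?M)"
      using finite_in_Dt[OF F] nn by (intro sum_mono2 Dt_finite) (auto simp: Dt_def)
    also have "\<dots> \<le> C" by (rule bd) simp
    finally show ?thesis .
  qed
  show s: "h summable_on desc_tuples q"
    by (rule nonneg_bdd_above_summable_on) (use nn fb in \<open>auto intro!: bdd_aboveI[where M=C]\<close>)
  show "infsum h (desc_tuples q) \<le> C"
    by (rule infsum_le_finite_sums[OF s]) (use fb in auto)
qed

lemma lower:
  fixes h :: "(nat \<Rightarrow> nat) \<Rightarrow> real"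
  assumes "h summable_on desc_tuples q" "q \<ge> 1"
    and nn: "\<And>n. n \<in> desc_tuples q \<Longrightarrow> h n \<ge> 0"
    and "h (e3 q) > 0"
  shows "h (e2 q) < infsum h (desc_tuples q)"
proof -
  have "sum h {e2 q, e3 q} \<le> infsum h (desc_tuples q)"
    by (rule finite_sum_le_infsum) (use assms e_in nn in auto)
  then show ?thesis using e_ne[OF assms(2)] assms(4) by simp
qed

theorem lemma4p3:
  shows "\<exists>C1::real. C1 > 0 \<and>
    (\<forall>r::nat. \<forall>k::nat \<Rightarrow> nat. r \<ge> 1 \<longrightarrow> (\<forall>i<r. k i \<ge> 2) \<longrightarrow>
      (let K = (\<Sum>i<r. k i);
           f = (\<lambda>n::nat \<Rightarrow> nat. 1 / (\<Prod>i<r. real (n i) ^ k i));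
           g = (\<lambda>n::nat \<Rightarrow> nat. 1 / ((\<Prod>i<r. real (n i) ^ k i) * real (n r)))
       in f summable_on desc_tuples r
          \<and> 1 / 2 ^ K < infsum f (desc_tuples r)
          \<and> infsum f (desc_tuples r) \<le> C1 / 2 ^ K
          \<and> g summable_on desc_tuples (Suc r)
          \<and> 1 / 2 ^ (K + 1) < infsum g (desc_tuples (Suc r))
          \<and> infsum g (desc_tuples (Suc r)) \<le> C1 / 2 ^ K))"
proof (intro exI[of _ 24] conjI allI impI)
  fix r :: nat and k :: "nat \<Rightarrow> nat"
  assume r: "r \<ge> 1" and k: "\<forall>i<r. k i \<ge> 2"
  define K where "K = (\<Sum>i<r. k i)"
  define f where "f = (\<lambda>n::nat \<Rightarrow> nat. 1 / (\<Prod>i<r. real (n i) ^ k i))"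
  define g where "g = (\<lambda>n::nat \<Rightarrow> nat. 1 / ((\<Prod>i<r. real (n i) ^ k i) * real (n r)))"
  have fnn: "f n \<ge> 0" if "n \<in> desc_tuples r" for n unfolding f_def by (simp add: prod_nonneg)
  have gnn: "g n \<ge> 0" if "n \<in> desc_tuples (Suc r)" for n unfolding g_def by (simp add: prod_nonneg)
  have fb: "sum f (Dt r m) \<le> 24 / 2 ^ K" if "m \<ge> 2" for m
  proof -
    have "sum f (Dt r m) \<le> 6 / 2 ^ K" unfolding f_def K_def by (rule f_bound[OF k that])
    also have "\<dots> \<le> 24 / 2 ^ K" by (simp add: divide_right_mono)
    finally show ?thesis .
  qed
  have gb: "sum g (Dt (Suc r) m) \<le> 24 / 2 ^ K" if "m \<ge> 2" for m
    unfolding g_def K_def by (rule g_bound[OF k that r])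
  note fs = summable_and_bound[of r f, OF fnn fb]
  note gs = summable_and_bound[of "Suc r" g, OF gnn gb]
  have f2: "f (e2 r) = 1 / 2 ^ K"
    unfolding f_def e2_def K_def by (simp add: power_sum)
  have f3: "f (e3 r) > 0"
    unfolding f_def e3_def by (intro divide_pos_pos prod_pos) auto
  have g2: "g (e2 (Suc r)) = 1 / 2 ^ (K + 1)"
    unfolding g_def e2_def K_def by (simp add: power_sum)
  have g3: "g (e3 (Suc r)) > 0"
    unfolding g_def e3_def by (intro divide_pos_pos mult_pos_pos prod_pos) auto
  have fl: "1 / 2 ^ K < infsum f (desc_tuples r)"
    using lower[OF fs(1) r fnn f3] f2 by simp
  have gl: "1 / 2 ^ (K + 1) < infsum g (desc_tuples (Suc r))"
    using lower[OF gs(1) _ gnn g3] g2 by simp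
  show "let K = (\<Sum>i<r. k i);
           f = (\<lambda>n::nat \<Rightarrow> nat. 1 / (\<Prod>i<r. real (n i) ^ k i));
           g = (\<lambda>n::nat \<Rightarrow> nat. 1 / ((\<Prod>i<r. real (n i) ^ k i) * real (n r)))
       in f summable_on desc_tuples r
          \<and> 1 / 2 ^ K < infsum f (desc_tuples r)
          \<and> infsum f (desc_tuples r) \<le> 24 / 2 ^ K
          \<and> g summable_on desc_tuples (Suc r)
          \<and> 1 / 2 ^ (K + 1) < infsum g (desc_tuples (Suc r))
          \<and> infsum g (desc_tuples (Suc r)) \<le> 24 / 2 ^ K"
    unfolding Let_def using fs gs fl gl unfolding f_def g_def K_def by simp
qed simp

end
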